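(* In the setting below, let $f,g\in[0,\infty)^{n\times p}$ and let $W(g)$ be the weight matrix computed at $g$. If $\sum_{i,j}W(g)_{ij}f_{ij}\le\sum_{i,j}W(g)_{ij}g_{ij}$, then $\mathcal L(f)\le\mathcal L(g)$.
   Context: Let $M=(m_{ij})\in\{0,1\}^{n\times p}$, $m_i=\sum_jm_{ij}\ge1$ for all $i$, $m=\sum_im_i$, and fix constants $\hat\sigma_{1,j}>0$, $\hat\sigma_2>0$. For $0<b<c$ and $q_1,q_2>0$ with $q_1\tanh(q_2(c-b))=b$, let $d=b^2/2+(q_1/q_2)\ln\cosh(q_2(c-b))$ and $\rho_{b,c}(z)=z^2/2$ if $|z|\le b$, $d-(q_1/q_2)\ln\cosh(q_2(c-|z|))$ if $b\le|z|\le c$, $d$ if $|z|\ge c$. Let $\rho_1=\rho_{b_1,c_1}$, $\rho_2=\rho_{b_2,c_2}$ (each with admissible constants), $\psi_k=\rho_k'$, $w_k(z)=\psi_k(z)/z$ ($z\ne0$), $w_k(0)=1$, and $h_k(z)=\rho_k(\sqrt z)$. For $f\in[0,\infty)^{n\times p}$, $$\mathcal L(f)=\frac{\hat\sigma_2^2}{m}\sum_{i=1}^n m_i\,h_2\!\Big(\frac{1}{m_i\hat\sigma_2^2}\sum_{j=1}^p m_{ij}\hat\sigma_{1,j}^2\,h_1\big(f_{ij}/\hat\sigma_{1,j}^2\big)\Big).$$ For $g\in[0,\infty)^{n\times p}$ let $t_i(g)=\sqrt{\frac1{m_i}\sum_jm_{ij}\hat\sigma_{1,j}^2h_1(g_{ij}/\hat\sigma_{1,j}^2)}$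 and $W(g)_{ij}=m_{ij}\,w_1\big(\sqrt{g_{ij}}/\hat\sigma_{1,j}\big)\,w_2\big(t_i(g)/\hat\sigma_2\big)$. *)

theory Defs
  imports "HOL-Analysis.Analysis"
begin

definition admissible :: "real \<Rightarrow> real \<Rightarrow> real \<Rightarrow> real \<Rightarrow> bool" where
  "admissible b c q1 q2 \<longleftrightarrow> 0 < b \<and> b < c \<and> 0 < q1 \<and> 0 < q2 \<and> q1 * tanh (q2 * (c - b)) = b"

definition rho_d :: "real \<Rightarrow> real \<Rightarrow> real \<Rightarrow> real \<Rightarrow> real" where
  "rho_d b c q1 q2 = b\<^sup>2 / 2 + (q1 / q2) * ln (cosh (q2 * (c - b)))"

definition rho :: "real \<Rightarrow> real \<Rightarrow> real \<Rightarrow> real \<Rightarrow> real \<Rightarrow> real" where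
  "rho b c q1 q2 z =
     (if \<bar>z\<bar> \<le> b then z\<^sup>2 / 2
      else if \<bar>z\<bar> \<le> c then rho_d b c q1 q2 - (q1 / q2) * ln (cosh (q2 * (c - \<bar>z\<bar>)))
      else rho_d b c q1 q2)"

definition psi :: "real \<Rightarrow> real \<Rightarrow> real \<Rightarrow> real \<Rightarrow> real \<Rightarrow> real" where
  "psi b c q1 q2 z = deriv (rho b c q1 q2) z"

definition wfun :: "real \<Rightarrow> real \<Rightarrow> real \<Rightarrow> real \<Rightarrow> real \<Rightarrow> real" where
  "wfun b c q1 q2 z = (if z = 0 then 1 else psi b c q1 q2 z / z)"

definition hfun :: "real \<Rightarrow> real \<Rightarrow> real \<Rightarrow> real \<Rightarrow> real \<Rightarrow> real" where
  "hfun b c q1 q2 z = rho b c q1 q2 (sqrt z)"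

definition mrow :: "nat \<Rightarrow> (nat \<Rightarrow> nat \<Rightarrow> real) \<Rightarrow> nat \<Rightarrow> real" where
  "mrow p M i = (\<Sum>j<p. M i j)"

definition mtot :: "nat \<Rightarrow> nat \<Rightarrow> (nat \<Rightarrow> nat \<Rightarrow> real) \<Rightarrow> real" where
  "mtot n p M = (\<Sum>i<n. mrow p M i)"

text \<open>The loss L(f). Parameters: (b1,c1,q11,q21) for rho_1, (b2,c2,q12,q22) for rho_2,
  s1 j = sigma_{1,j}, s2 = sigma_2.\<close>
definition Lfun ::
  "nat \<Rightarrow> nat \<Rightarrow> (nat \<Rightarrow> nat \<Rightarrow> real) \<Rightarrow> (nat \<Rightarrow> real) \<Rightarrow> real \<Rightarrow>
   real \<Rightarrow> real \<Rightarrow> real \<Rightarrow> real \<Rightarrow> real \<Rightarrow> real \<Rightarrow> real \<Rightarrow> real \<Rightarrow>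
   (nat \<Rightarrow> nat \<Rightarrow> real) \<Rightarrow> real" where
  "Lfun n p M s1 s2 b1 c1 q11 q21 b2 c2 q12 q22 f =
     s2\<^sup>2 / mtot n p M *
     (\<Sum>i<n. mrow p M i *
        hfun b2 c2 q12 q22
          ((1 / (mrow p M i * s2\<^sup>2)) *
           (\<Sum>j<p. M i j * (s1 j)\<^sup>2 * hfun b1 c1 q11 q21 (f i j / (s1 j)\<^sup>2))))"

definition tfun ::
  "nat \<Rightarrow> (nat \<Rightarrow> nat \<Rightarrow> real) \<Rightarrow> (nat \<Rightarrow> real) \<Rightarrow>
   real \<Rightarrow> real \<Rightarrow> real \<Rightarrow> real \<Rightarrow> (nat \<Rightarrow> nat \<Rightarrow> real) \<Rightarrow> nat \<Rightarrow> real" where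
  "tfun p M s1 b1 c1 q11 q21 g i =
     sqrt ((1 / mrow p M i) *
           (\<Sum>j<p. M i j * (s1 j)\<^sup>2 * hfun b1 c1 q11 q21 (g i j / (s1 j)\<^sup>2)))"

definition Wmat ::
  "nat \<Rightarrow> (nat \<Rightarrow> nat \<Rightarrow> real) \<Rightarrow> (nat \<Rightarrow> real) \<Rightarrow> real \<Rightarrow>
   real \<Rightarrow> real \<Rightarrow> real \<Rightarrow> real \<Rightarrow> real \<Rightarrow> real \<Rightarrow> real \<Rightarrow> real \<Rightarrow>
   (nat \<Rightarrow> nat \<Rightarrow> real) \<Rightarrow> nat \<Rightarrow> nat \<Rightarrow> real" where
  "Wmat p M s1 s2 b1 c1 q11 q21 b2 c2 q12 q22 g i j =
     M i j * wfun b1 c1 q11 q21 (sqrt (g i j) / s1 j)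
           * wfun b2 c2 q12 q22 (tfun p M s1 b1 c1 q11 q21 g i / s2)"

end

theory Submission
  imports Defs
begin

lemma deriv_glue:
  fixes F L R :: "real \<Rightarrow> real"
  assumes "eventually (\<lambda>y. F y = L y) (at_left x)" "eventually (\<lambda>y. F y = R y) (at_right x)"
    "F x = L x" "F x = R x"
    "(L has_real_derivative D) (at x)" "(R has_real_derivative D) (at x)"
  shows "(F has_real_derivative D) (at x)"
proof -
  have l: "((\<lambda>y. (L y - L x) / (y - x)) \<longlongrightarrow> D) (at_left x)"
    using has_field_derivative_at_within[OF assms(5), of "{..<x}"] unfolding has_field_derivative_iff .
  have r: "((\<lambda>y. (R y - R x) / (y - x)) \<longlongrightarrow> D) (at_right x)"
    using has_field_derivative_at_within[OF assms(6), of "{x<..}"] unfolding has_field_derivative_iff .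
  have l': "((\<lambda>y. (F y - F x) / (y - x)) \<longlongrightarrow> D) (at_left x)"
    by (rule Lim_transform_eventually[OF l]) (use assms(1,3) in \<open>auto elim: eventually_mono\<close>)
  have r': "((\<lambda>y. (F y - F x) / (y - x)) \<longlongrightarrow> D) (at_right x)"
    by (rule Lim_transform_eventually[OF r]) (use assms(2,4) in \<open>auto elim: eventually_mono\<close>)
  show ?thesis unfolding has_field_derivative_iff using filterlim_at_split[THEN iffD2, OF conjI[OF l' r']] .
qed

lemma B_deriv:
  assumes "q2 > 0"
  shows "((\<lambda>s. rho_d b c q1 q2 - (q1 / q2) * ln (cosh (q2 * (c - s)))) has_real_derivative
          q1 * tanh (q2 * (c - s))) (at s)"
  using assms by (auto intro!: derivative_eq_intros simp: tanh_def field_simps)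

definition psi0 :: "real \<Rightarrow> real \<Rightarrow> real \<Rightarrow> real \<Rightarrow> real \<Rightarrow> real" where
  "psi0 b c q1 q2 s = (if s \<le> b then s else if s \<le> c then q1 * tanh (q2 * (c - s)) else 0)"

lemma rho_deriv:
  assumes adm: "admissible b c q1 q2" and s: "s > 0"
  shows "(rho b c q1 q2 has_real_derivative psi0 b c q1 q2 s) (at s)"
proof -
  from adm have b: "0 < b" "b < c" "0 < q1" "0 < q2" and tb: "q1 * tanh (q2 * (c - b)) = b"
    by (auto simp: admissible_def)
  define A where "A = (\<lambda>s::real. s\<^sup>2 / 2)"
  define B where "B = (\<lambda>s. rho_d b c q1 q2 - (q1 / q2) * ln (cosh (q2 * (c - s))))"
  define C where "C = (\<lambda>s::real. rho_d b c q1 q2)"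
  have rA: "rho b c q1 q2 y = A y" if "0 < y" "y \<le> b" for y
  proof -
    have "\<bar>y\<bar> \<le> b" using that by simp
    then show ?thesis unfolding rho_def A_def by simp
  qed
  have Bb: "B b = b\<^sup>2 / 2" unfolding B_def rho_d_def by simp
  have Bc: "B c = C c" unfolding B_def C_def by simp
  have rB: "rho b c q1 q2 y = B y" if "b \<le> y" "y \<le> c" for y
  proof (cases "y = b")
    case True
    then show ?thesis using b Bb by (simp add: rho_def)
  next
    case False
    then have "\<not> \<bar>y\<bar> \<le> b" "\<bar>y\<bar> \<le> c" "\<bar>y\<bar> = y" using that b by auto
    then show ?thesis unfolding rho_def B_def by simp
  qed
  have rC: "rho b c q1 q2 y = C y" if "c \<le> y" for y
  proof (cases "y = c")
    case True
    then show ?thesis using rB[of c] b Bc by simp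
  next
    case False
    then have "\<not> \<bar>y\<bar> \<le> b" "\<not> \<bar>y\<bar> \<le> c" using that b by auto
    then show ?thesis unfolding rho_def C_def by simp
  qed
  have dA: "(A has_real_derivative y) (at y)" for y
    unfolding A_def by (auto intro!: derivative_eq_intros)
  have dB: "(B has_real_derivative q1 * tanh (q2 * (c - y))) (at y)" for y
    unfolding B_def using B_deriv[OF b(4)] .
  have dC: "(C has_real_derivative 0) (at y)" for y
    unfolding C_def by (auto intro!: derivative_eq_intros)
  consider "s < b" | "s = b" | "b < s" "s < c" | "s = c" | "c < s" by linarith
  then show ?thesis
  proof cases
    case 1
    have e1: "eventually (\<lambda>y. rho b c q1 q2 y = A y) (at_left s)"
      by (rule eventually_mono[OF eventually_at_left_real[OF s]]) (use 1 in \<open>auto intro!: rA\<close>)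
    have e2: "eventually (\<lambda>y. rho b c q1 q2 y = A y) (at_right s)"
      by (rule eventually_mono[OF eventually_at_right_real[OF 1]]) (use 1 s in \<open>auto intro!: rA\<close>)
    have "psi0 b c q1 q2 s = s" using 1 by (simp add: psi0_def)
    then show ?thesis using deriv_glue[OF e1 e2 rA rA dA dA] 1 s by simp
  next
    case 2
    have e1: "eventually (\<lambda>y. rho b c q1 q2 y = A y) (at_left s)"
      by (rule eventually_mono[OF eventually_at_left_real[OF s]]) (use 2 in \<open>auto intro!: rA\<close>)
    have e2: "eventually (\<lambda>y. rho b c q1 q2 y = B y) (at_right s)"
      by (rule eventually_mono[OF eventually_at_right_real[of s c]]) (use 2 b in \<open>auto intro!: rB\<close>)
    have p: "psi0 b c q1 q2 s = s" using 2 by (simp add: psi0_def)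
    have d2: "(B has_real_derivative s) (at s)" using dB[of s] 2 tb by simp
    show ?thesis using deriv_glue[OF e1 e2 rA[of s] rB[of s] dA d2] 2 b p by simp
  next
    case 3
    have e1: "eventually (\<lambda>y. rho b c q1 q2 y = B y) (at_left s)"
      by (rule eventually_mono[OF eventually_at_left_real[OF 3(1)]]) (use 3 in \<open>auto intro!: rB\<close>)
    have e2: "eventually (\<lambda>y. rho b c q1 q2 y = B y) (at_right s)"
      by (rule eventually_mono[OF eventually_at_right_real[OF 3(2)]]) (use 3 in \<open>auto intro!: rB\<close>)
    have p: "psi0 b c q1 q2 s = q1 * tanh (q2 * (c - s))" using 3 by (simp add: psi0_def)
    show ?thesis using deriv_glue[OF e1 e2 rB[of s] rB[of s] dB dB] 3 p by simp
  next
    case 4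
    have e1: "eventually (\<lambda>y. rho b c q1 q2 y = B y) (at_left s)"
      by (rule eventually_mono[OF eventually_at_left_real[of b s]]) (use 4 b in \<open>auto intro!: rB\<close>)
    have e2: "eventually (\<lambda>y. rho b c q1 q2 y = C y) (at_right s)"
      by (rule eventually_mono[OF eventually_at_right_real[of s "s+1"]]) (use 4 in \<open>auto intro!: rC\<close>)
    have p: "psi0 b c q1 q2 s = 0" using 4 b by (simp add: psi0_def)
    have d2: "(B has_real_derivative 0) (at s)" using dB[of s] 4 by simp
    show ?thesis using deriv_glue[OF e1 e2 rB[of s] rC[of s] d2 dC] 4 b p by simp
  next
    case 5
    have e1: "eventually (\<lambda>y. rho b c q1 q2 y = C y) (at_left s)"
      by (rule eventually_mono[OF eventually_at_left_real[OF 5]]) (use 5 in \<open>auto intro!: rC\<close>)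
    have e2: "eventually (\<lambda>y. rho b c q1 q2 y = C y) (at_right s)"
      by (rule eventually_mono[OF eventually_at_right_real[of s "s+1"]]) (use 5 in \<open>auto intro!: rC\<close>)
    have p: "psi0 b c q1 q2 s = 0" using 5 b by (simp add: psi0_def)
    show ?thesis using deriv_glue[OF e1 e2 rC[of s] rC[of s] dC dC] 5 p by simp
  qed
qed


definition wpos :: "real \<Rightarrow> real \<Rightarrow> real \<Rightarrow> real \<Rightarrow> real \<Rightarrow> real" where
  "wpos b c q1 q2 z = (if z \<le> b then 1 else if z \<le> c then q1 * tanh (q2 * (c - z)) / z else 0)"

lemma wfun_eq:
  assumes adm: "admissible b c q1 q2" and z: "z \<ge> 0"
  shows "wfun b c q1 q2 z = wpos b c q1 q2 z"
proof (cases "z = 0")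
  case True
  then show ?thesis using adm by (simp add: wfun_def wpos_def admissible_def)
next
  case False
  then have zp: "z > 0" using z by simp
  have "psi b c q1 q2 z = psi0 b c q1 q2 z"
    unfolding psi_def using DERIV_imp_deriv[OF rho_deriv[OF adm zp]] .
  then show ?thesis using zp by (simp add: wfun_def wpos_def psi0_def)
qed

lemma wpos_nonneg:
  assumes adm: "admissible b c q1 q2" and z: "z \<ge> 0"
  shows "wpos b c q1 q2 z \<ge> 0"
  using adm z by (auto simp: wpos_def admissible_def intro!: divide_nonneg_nonneg mult_nonneg_nonneg)

lemma wpos_antimono:
  assumes adm: "admissible b c q1 q2" and st: "0 \<le> s" "s \<le> t"
  shows "wpos b c q1 q2 t \<le> wpos b c q1 q2 s"
proof -
  from adm have b: "0 < b" "b < c" "0 < q1" "0 < q2" and tb: "q1 * tanh (q2 * (c - b)) = b"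
    by (auto simp: admissible_def)
  have le1: "wpos b c q1 q2 t \<le> 1"
  proof (cases "t \<le> b")
    case True then show ?thesis by (simp add: wpos_def)
  next
    case False
    show ?thesis
    proof (cases "t \<le> c")
      case True
      have "q1 * tanh (q2 * (c - t)) \<le> q1 * tanh (q2 * (c - b))"
        using b False by (intro mult_left_mono) (auto intro!: mult_left_mono)
      then have "q1 * tanh (q2 * (c - t)) \<le> t" using tb False by simp
      then show ?thesis using False True b by (simp add: wpos_def)
    qed (use False in \<open>simp add: wpos_def\<close>)
  qed
  consider "s \<le> b" | "b < s" "t \<le> c" | "c < t" by linarith
  then show ?thesis
  proof cases
    case 1 then show ?thesis using le1 by (simp add: wpos_def)
  next
    case 2
    have n: "q1 * tanh (q2 * (c - t)) \<le> q1 * tanh (q2 * (c - s))"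
      using b st by (intro mult_left_mono) (auto intro!: mult_left_mono)
    have n0: "0 \<le> q1 * tanh (q2 * (c - t))" using b 2 by simp
    have "q1 * tanh (q2 * (c - t)) / t \<le> q1 * tanh (q2 * (c - s)) / s"
      using n n0 2 st b by (intro frac_le) auto
    then show ?thesis using 2 st by (simp add: wpos_def)
  next
    case 3
    then have "wpos b c q1 q2 t = 0" using st b by (simp add: wpos_def)
    then show ?thesis using wpos_nonneg[OF adm st(1)] by simp
  qed
qed

lemma h_deriv:
  assumes adm: "admissible b c q1 q2" and x: "x > 0"
  shows "(hfun b c q1 q2 has_real_derivative wpos b c q1 q2 (sqrt x) / 2) (at x)"
proof -
  have sx: "sqrt x > 0" using x by simp
  have "((\<lambda>x. rho b c q1 q2 (sqrt x)) has_real_derivative psi0 b c q1 q2 (sqrt x) * (inverse (sqrt x) / 2)) (at x)"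
    by (rule DERIV_chain2[OF rho_deriv[OF adm sx] DERIV_real_sqrt[OF x]])
  moreover have "psi0 b c q1 q2 (sqrt x) * (inverse (sqrt x) / 2) = wpos b c q1 q2 (sqrt x) / 2"
    using sx by (simp add: psi0_def wpos_def field_simps)
  ultimately show ?thesis unfolding hfun_def[abs_def] by simp
qed

lemma rho_nonneg:
  assumes adm: "admissible b c q1 q2" and z: "z \<ge> 0"
  shows "rho b c q1 q2 z \<ge> 0"
proof -
  from adm have b: "0 < b" "b < c" "0 < q1" "0 < q2"
    by (auto simp: admissible_def)
  consider "z \<le> b" | "b < z" "z \<le> c" | "c < z" by linarith
  then show ?thesis
  proof cases
    case 1 then show ?thesis using z by (simp add: rho_def)
  next
    case 2
    have "cosh (q2 * (c - z)) \<le> cosh (q2 * (c - b))"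
      using 2 b by (subst cosh_real_nonneg_le_iff) (auto intro!: mult_left_mono)
    then have "ln (cosh (q2 * (c - z))) \<le> ln (cosh (q2 * (c - b)))" by simp
    then have "(q1/q2) * ln (cosh (q2 * (c - z))) \<le> (q1/q2) * ln (cosh (q2 * (c - b)))"
      using b by (intro mult_left_mono) auto
    moreover have rz: "rho b c q1 q2 z = rho_d b c q1 q2 - (q1/q2) * ln (cosh (q2 * (c - z)))"
      using 2 z b by (simp add: rho_def)
    ultimately show ?thesis unfolding rz rho_d_def using zero_le_power2[of b] by linarith
  next
    case 3
    have "0 \<le> ln (cosh (q2 * (c - b)))" using cosh_real_ge_1 by simp
    then have "0 \<le> (q1/q2) * ln (cosh (q2 * (c - b)))" using b by simp
    then show ?thesis using 3 z b by (simp add: rho_def rho_d_def)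
  qed
qed

lemma h_nonneg: "admissible b c q1 q2 \<Longrightarrow> x \<ge> 0 \<Longrightarrow> hfun b c q1 q2 x \<ge> 0"
  unfolding hfun_def by (rule rho_nonneg) auto


lemma h_mvt:
  assumes adm: "admissible b c q1 q2" and ab: "0 < a" "a < t"
  shows "\<exists>z. a < z \<and> z < t \<and> hfun b c q1 q2 t - hfun b c q1 q2 a = (t - a) * (wpos b c q1 q2 (sqrt z) / 2)"
  by (rule MVT2[OF ab(2)]) (rule h_deriv[OF adm], use ab in auto)

lemma Hd_antimono:
  assumes adm: "admissible b c q1 q2" and "0 \<le> s" "s \<le> t"
  shows "wpos b c q1 q2 (sqrt t) \<le> wpos b c q1 q2 (sqrt s)"
  using assms by (intro wpos_antimono) auto

lemma h_small:
  assumes adm: "admissible b c q1 q2" and "0 \<le> y" "y \<le> b\<^sup>2"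
  shows "hfun b c q1 q2 y = y / 2"
proof -
  have b: "b > 0" using adm by (simp add: admissible_def)
  have "sqrt y \<le> b" using assms b by (metis real_le_lsqrt less_imp_le)
  then show ?thesis using assms by (simp add: hfun_def rho_def)
qed

lemma h_concave_pos:
  assumes adm: "admissible b c q1 q2" and x: "x > 0" and y: "y \<ge> 0"
  shows "hfun b c q1 q2 y \<le> hfun b c q1 q2 x + wpos b c q1 q2 (sqrt x) / 2 * (y - x)"
proof -
  have b: "b > 0" using adm by (simp add: admissible_def)
  have main: "hfun b c q1 q2 y \<le> hfun b c q1 q2 x + wpos b c q1 q2 (sqrt x) / 2 * (y - x)"
    if y: "y > 0" for y
  proof -
    consider "x < y" | "x = y" | "y < x" by linarith
    then show ?thesis
    proof cases
      case 1
      obtain z where z: "x < z" "z < y" "hfun b c q1 q2 y - hfun b c q1 q2 x = (y - x) * (wpos b c q1 q2 (sqrt z) / 2)"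
        using h_mvt[OF adm x 1] by blast
      have "wpos b c q1 q2 (sqrt z) \<le> wpos b c q1 q2 (sqrt x)"
        using Hd_antimono[OF adm _ ] x z by auto
      then have "(y - x) * (wpos b c q1 q2 (sqrt z) / 2) \<le> (y - x) * (wpos b c q1 q2 (sqrt x) / 2)"
        using 1 by (intro mult_left_mono) auto
      moreover have "(y - x) * (wpos b c q1 q2 (sqrt x) / 2) = wpos b c q1 q2 (sqrt x) / 2 * (y - x)" by simp
      ultimately show ?thesis using z by linarith
    next
      case 2 then show ?thesis by simp
    next
      case 3
      obtain z where z: "y < z" "z < x" "hfun b c q1 q2 x - hfun b c q1 q2 y = (x - y) * (wpos b c q1 q2 (sqrt z) / 2)"
        using h_mvt[OF adm y 3] by blast
      have "wpos b c q1 q2 (sqrt x) \<le> wpos b c q1 q2 (sqrt z)"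
        using Hd_antimono[OF adm _ ] y z by auto
      then have "(x - y) * (wpos b c q1 q2 (sqrt x) / 2) \<le> (x - y) * (wpos b c q1 q2 (sqrt z) / 2)"
        using 3 by (intro mult_left_mono) auto
      moreover have "(x - y) * (wpos b c q1 q2 (sqrt x) / 2) = - (wpos b c q1 q2 (sqrt x) / 2 * (y - x))" by (simp add: field_simps)
      ultimately show ?thesis using z by linarith
    qed
  qed
  show ?thesis
  proof (cases "y > 0")
    case True then show ?thesis using main by blast
  next
    case False
    then have y0: "y = 0" using y by simp
    define y' where "y' = min x (b\<^sup>2) / 2"
    have y': "0 < y'" "y' < x" "y' \<le> b\<^sup>2" using x b by (auto simp: y'_def min_def)
    have m: "hfun b c q1 q2 y' \<le> hfun b c q1 q2 x + wpos b c q1 q2 (sqrt x) / 2 * (y' - x)"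
      using main[OF y'(1)] .
    have hy': "hfun b c q1 q2 y' = y' / 2" using h_small[OF adm _ y'(3)] y' by simp
    have h0: "hfun b c q1 q2 0 = 0" using h_small[OF adm order_refl zero_le_power2] by simp
    have w1: "wpos b c q1 q2 (sqrt x) \<le> 1"
      using Hd_antimono[OF adm order_refl, of x] x b by (simp add: wpos_def)
    have "wpos b c q1 q2 (sqrt x) / 2 * y' \<le> y' / 2"
      using w1 y' by (simp add: mult_right_le_one_le)
    moreover have e1: "wpos b c q1 q2 (sqrt x) / 2 * (y' - x) = wpos b c q1 q2 (sqrt x) / 2 * y' - wpos b c q1 q2 (sqrt x) / 2 * x"
      by (simp add: right_diff_distrib)
    moreover have e2: "wpos b c q1 q2 (sqrt x) / 2 * (y - x) = - (wpos b c q1 q2 (sqrt x) / 2 * x)" using y0 by simp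
    moreover have "hfun b c q1 q2 y = 0" using h0 y0 by simp
    ultimately show ?thesis using m hy' by linarith
  qed
qed

lemma h_concave:
  assumes adm: "admissible b c q1 q2" and x: "x \<ge> 0" and y: "y \<ge> 0"
  shows "hfun b c q1 q2 y \<le> hfun b c q1 q2 x + wpos b c q1 q2 (sqrt x) / 2 * (y - x)"
proof (cases "x > 0")
  case True then show ?thesis using h_concave_pos[OF adm True y] by simp
next
  case False
  then have x0: "x = 0" using x by simp
  have b: "b > 0" using adm by (simp add: admissible_def)
  have w0: "wpos b c q1 q2 (sqrt 0) = 1" using b by (simp add: wpos_def)
  have h0: "hfun b c q1 q2 0 = 0" using h_small[OF adm order_refl zero_le_power2] by simp
  have "hfun b c q1 q2 y \<le> y / 2"
  proof (cases "y \<le> b\<^sup>2")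
    case True then show ?thesis using h_small[OF adm y] by simp
  next
    case False
    have bp: "b\<^sup>2 > 0" using b by simp
    have "hfun b c q1 q2 y \<le> hfun b c q1 q2 (b\<^sup>2) + wpos b c q1 q2 (sqrt (b\<^sup>2)) / 2 * (y - b\<^sup>2)"
      using h_concave_pos[OF adm bp y] .
    moreover have "hfun b c q1 q2 (b\<^sup>2) = b\<^sup>2 / 2" using h_small[OF adm zero_le_power2 order_refl] .
    moreover have "wpos b c q1 q2 (sqrt (b\<^sup>2)) = 1" using b by (simp add: wpos_def)
    ultimately have "hfun b c q1 q2 y \<le> b\<^sup>2 / 2 + (y - b\<^sup>2) / 2" by simp
    moreover have "b\<^sup>2 / 2 + (y - b\<^sup>2) / 2 = y / 2" by (simp add: field_simps)
    ultimately show ?thesis by linarith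
  qed
  then show ?thesis using x0 w0 h0 by simp
qed


lemma alg_id:
  fixes m s h w S :: real
  assumes "m > 0" "s > 0"
  shows "m * (h + w / 2 * ((1 / (m * s\<^sup>2)) * S)) = m * h + (1 / (4 * s\<^sup>2)) * (2 * w * S)"
  using assms by (simp add: field_simps)

theorem lemma3:
  fixes n p :: nat and M :: "nat \<Rightarrow> nat \<Rightarrow> real" and s1 :: "nat \<Rightarrow> real" and s2 :: real
    and b1 c1 q11 q21 b2 c2 q12 q22 :: real
    and f g :: "nat \<Rightarrow> nat \<Rightarrow> real"
  assumes M01: "\<And>i j. i < n \<Longrightarrow> j < p \<Longrightarrow> M i j \<in> {0, 1}"
    and mrow_ge: "\<And>i. i < n \<Longrightarrow> mrow p M i \<ge> 1"
    and s1_pos: "\<And>j. j < p \<Longrightarrow> s1 j > 0"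
    and s2_pos: "s2 > 0"
    and adm1: "admissible b1 c1 q11 q21"
    and adm2: "admissible b2 c2 q12 q22"
    and f_nonneg: "\<And>i j. i < n \<Longrightarrow> j < p \<Longrightarrow> f i j \<ge> 0"
    and g_nonneg: "\<And>i j. i < n \<Longrightarrow> j < p \<Longrightarrow> g i j \<ge> 0"
    and hyp: "(\<Sum>i<n. \<Sum>j<p. Wmat p M s1 s2 b1 c1 q11 q21 b2 c2 q12 q22 g i j * f i j)
              \<le> (\<Sum>i<n. \<Sum>j<p. Wmat p M s1 s2 b1 c1 q11 q21 b2 c2 q12 q22 g i j * g i j)"
  shows "Lfun n p M s1 s2 b1 c1 q11 q21 b2 c2 q12 q22 f
         \<le> Lfun n p M s1 s2 b1 c1 q11 q21 b2 c2 q12 q22 g"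
proof -
  define h1 where "h1 = hfun b1 c1 q11 q21"
  define h2 where "h2 = hfun b2 c2 q12 q22"
  define w1 where "w1 = wpos b1 c1 q11 q21"
  define w2 where "w2 = wpos b2 c2 q12 q22"
  define W where "W = Wmat p M s1 s2 b1 c1 q11 q21 b2 c2 q12 q22 g"
  define U where "U = (\<lambda>F i. \<Sum>j<p. M i j * (s1 j)\<^sup>2 * h1 (F i j / (s1 j)\<^sup>2))"
  define u where "u = (\<lambda>F i. (1 / (mrow p M i * s2\<^sup>2)) * U F i)"
  have M0: "M i j \<ge> 0" if "i < n" "j < p" for i j using M01[OF that] by auto
  have U0: "U F i \<ge> 0" if "i < n" "\<And>j. j < p \<Longrightarrow> F i j \<ge> 0" for F i
    unfolding U_def h1_def using M0 that s1_pos
    by (intro sum_nonneg mult_nonneg_nonneg h_nonneg[OF adm1]) auto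
  have mp: "mrow p M i > 0" if "i < n" for i using mrow_ge[OF that] by simp
  have u0: "u F i \<ge> 0" if "i < n" "\<And>j. j < p \<Longrightarrow> F i j \<ge> 0" for F i
    unfolding u_def using U0[of i F, OF that] mp[OF that(1)] s2_pos by simp
  have stepU: "U f i - U g i \<le> (\<Sum>j<p. M i j * (w1 (sqrt (g i j / (s1 j)\<^sup>2)) / 2) * (f i j - g i j))"
    if i: "i < n" for i
  proof -
    have "M i j * (s1 j)\<^sup>2 * h1 (f i j / (s1 j)\<^sup>2) \<le>
          M i j * (s1 j)\<^sup>2 * h1 (g i j / (s1 j)\<^sup>2) + M i j * (w1 (sqrt (g i j / (s1 j)\<^sup>2)) / 2) * (f i j - g i j)"
      if j: "j < p" for j
    proof -
      have sp: "s1 j > 0" using s1_pos[OF j] .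
      have c: "h1 (f i j / (s1 j)\<^sup>2) \<le> h1 (g i j / (s1 j)\<^sup>2) + w1 (sqrt (g i j / (s1 j)\<^sup>2)) / 2 * (f i j / (s1 j)\<^sup>2 - g i j / (s1 j)\<^sup>2)"
        unfolding h1_def w1_def
        by (rule h_concave[OF adm1]) (use f_nonneg[OF i j] g_nonneg[OF i j] in auto)
      have "M i j * (s1 j)\<^sup>2 * h1 (f i j / (s1 j)\<^sup>2) \<le> M i j * (s1 j)\<^sup>2 * (h1 (g i j / (s1 j)\<^sup>2) + w1 (sqrt (g i j / (s1 j)\<^sup>2)) / 2 * (f i j / (s1 j)\<^sup>2 - g i j / (s1 j)\<^sup>2))"
        using c M0[OF i j] by (intro mult_left_mono) auto
      also have "\<dots> = M i j * (s1 j)\<^sup>2 * h1 (g i j / (s1 j)\<^sup>2) + M i j * (w1 (sqrt (g i j / (s1 j)\<^sup>2)) / 2) * (f i j - g i j)"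
        using sp by (simp add: field_simps)
      finally show ?thesis .
    qed
    then have "U f i \<le> (\<Sum>j<p. M i j * (s1 j)\<^sup>2 * h1 (g i j / (s1 j)\<^sup>2) + M i j * (w1 (sqrt (g i j / (s1 j)\<^sup>2)) / 2) * (f i j - g i j))"
      unfolding U_def by (intro sum_mono) auto
    then show ?thesis unfolding U_def by (simp add: sum.distrib)
  qed
  have stepI: "mrow p M i * h2 (u f i) \<le> mrow p M i * h2 (u g i) + (1 / (4 * s2\<^sup>2)) * (\<Sum>j<p. W i j * (f i j - g i j))"
    if i: "i < n" for i
  proof -
    have m: "mrow p M i > 0" using mp[OF i] .
    have c: "h2 (u f i) \<le> h2 (u g i) + w2 (sqrt (u g i)) / 2 * (u f i - u g i)"
      unfolding h2_def w2_def
      by (rule h_concave[OF adm2]) (use u0[of i f, OF i f_nonneg[OF i]] u0[of i g, OF i g_nonneg[OF i]] in auto)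
    have w2n: "w2 (sqrt (u g i)) \<ge> 0" unfolding w2_def by (rule wpos_nonneg[OF adm2]) (use u0[of i g, OF i g_nonneg[OF i]] in simp)
    have du: "u f i - u g i \<le> (1 / (mrow p M i * s2\<^sup>2)) * (\<Sum>j<p. M i j * (w1 (sqrt (g i j / (s1 j)\<^sup>2)) / 2) * (f i j - g i j))"
    proof -
      have pos: "1 / (mrow p M i * s2\<^sup>2) > 0" using m s2_pos by simp
      have "u f i - u g i = (1 / (mrow p M i * s2\<^sup>2)) * (U f i - U g i)"
        unfolding u_def by (simp add: right_diff_distrib)
      also have "\<dots> \<le> (1 / (mrow p M i * s2\<^sup>2)) * (\<Sum>j<p. M i j * (w1 (sqrt (g i j / (s1 j)\<^sup>2)) / 2) * (f i j - g i j))"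
        by (rule mult_left_mono[OF stepU[OF i]]) (use pos in simp)
      finally show ?thesis .
    qed
    have "mrow p M i * h2 (u f i) \<le> mrow p M i * (h2 (u g i) + w2 (sqrt (u g i)) / 2 * (u f i - u g i))"
      using c m by (intro mult_left_mono) auto
    also have "\<dots> \<le> mrow p M i * (h2 (u g i) + w2 (sqrt (u g i)) / 2 *
        ((1 / (mrow p M i * s2\<^sup>2)) * (\<Sum>j<p. M i j * (w1 (sqrt (g i j / (s1 j)\<^sup>2)) / 2) * (f i j - g i j))))"
      using du w2n m by (intro mult_left_mono add_left_mono) auto
    also have "\<dots> = mrow p M i * h2 (u g i) + (1 / (4 * s2\<^sup>2)) *
        (2 * w2 (sqrt (u g i)) * (\<Sum>j<p. M i j * (w1 (sqrt (g i j / (s1 j)\<^sup>2)) / 2) * (f i j - g i j)))"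
      by (rule alg_id[OF m s2_pos])
    also have "2 * w2 (sqrt (u g i)) * (\<Sum>j<p. M i j * (w1 (sqrt (g i j / (s1 j)\<^sup>2)) / 2) * (f i j - g i j))
       = (\<Sum>j<p. M i j * w1 (sqrt (g i j / (s1 j)\<^sup>2)) * w2 (sqrt (u g i)) * (f i j - g i j))"
      unfolding sum_distrib_left by (rule sum.cong) auto
    also have "(\<Sum>j<p. M i j * w1 (sqrt (g i j / (s1 j)\<^sup>2)) * w2 (sqrt (u g i)) * (f i j - g i j))
               = (\<Sum>j<p. W i j * (f i j - g i j))"
    proof (rule sum.cong[OF refl])
      fix j assume "j \<in> {..<p}"
      then have j: "j < p" by simp
      have sp: "s1 j > 0" using s1_pos[OF j] .
      have e1: "wfun b1 c1 q11 q21 (sqrt (g i j) / s1 j) = w1 (sqrt (g i j / (s1 j)\<^sup>2))"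
        unfolding w1_def using sp g_nonneg[OF i j]
        by (subst wfun_eq[OF adm1]) (auto simp: real_sqrt_divide)
      have tf: "tfun p M s1 b1 c1 q11 q21 g i / s2 = sqrt (u g i)"
        unfolding tfun_def u_def U_def h1_def using s2_pos m
        by (simp add: real_sqrt_divide real_sqrt_mult)
      have e2: "wfun b2 c2 q12 q22 (tfun p M s1 b1 c1 q11 q21 g i / s2) = w2 (sqrt (u g i))"
        unfolding tf w2_def by (rule wfun_eq[OF adm2]) (use u0[of i g, OF i g_nonneg[OF i]] in simp)
      show "M i j * w1 (sqrt (g i j / (s1 j)\<^sup>2)) * w2 (sqrt (u g i)) * (f i j - g i j) = W i j * (f i j - g i j)"
        unfolding W_def Wmat_def e1 e2 ..
    qed
    finally show ?thesis .
  qed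
  have S: "(\<Sum>i<n. mrow p M i * h2 (u f i)) \<le> (\<Sum>i<n. mrow p M i * h2 (u g i) + (1 / (4 * s2\<^sup>2)) * (\<Sum>j<p. W i j * (f i j - g i j)))"
    by (intro sum_mono) (use stepI in auto)
  have K: "(\<Sum>i<n. \<Sum>j<p. W i j * (f i j - g i j)) \<le> 0"
    using hyp unfolding W_def[symmetric]
    by (simp add: right_diff_distrib sum_subtractf)
  have S2: "(\<Sum>i<n. mrow p M i * h2 (u f i)) \<le> (\<Sum>i<n. mrow p M i * h2 (u g i))"
  proof -
    have "(\<Sum>i<n. mrow p M i * h2 (u g i) + (1 / (4 * s2\<^sup>2)) * (\<Sum>j<p. W i j * (f i j - g i j)))
        = (\<Sum>i<n. mrow p M i * h2 (u g i)) + (1 / (4 * s2\<^sup>2)) * (\<Sum>i<n. \<Sum>j<p. W i j * (f i j - g i j))"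
      by (simp add: sum.distrib sum_distrib_left)
    moreover have "(1 / (4 * s2\<^sup>2)) * (\<Sum>i<n. \<Sum>j<p. W i j * (f i j - g i j)) \<le> 0"
      using K s2_pos by (intro mult_nonneg_nonpos) auto
    ultimately show ?thesis using S by linarith
  qed
  have mt: "mtot n p M \<ge> 0" unfolding mtot_def using mrow_ge
    by (intro sum_nonneg) (smt (verit) lessThan_iff)
  have "s2\<^sup>2 / mtot n p M * (\<Sum>i<n. mrow p M i * h2 (u f i)) \<le> s2\<^sup>2 / mtot n p M * (\<Sum>i<n. mrow p M i * h2 (u g i))"
    using S2 mt by (intro mult_left_mono) auto
  then show ?thesis unfolding Lfun_def u_def U_def h1_def h2_def .
qed

end
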